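(* Let $A$ be the $2$-pole obtained from the Petersen graph by cutting one edge into a pair of dangling edges. Then: (a) every perfect matching of $A$ contains either both dangling edges or neither of them; (b) if $M_1, M_2, M_3$ are perfect matchings of $A$ none of which contains a dangling edge, then at least $2$ links of $A$ are not covered by $M_1\cup M_2\cup M_3$, and for a suitable such triple exactly $2$ links are uncovered; (c) if $M_1, M_2, M_3$ are perfect matchings of $A$ one of which contains a dangling edge, then at least $3$ links of $A$ are not covered by $M_1\cup M_2\cup M_3$, and for a suitable such triple exactly $3$ links are uncovered.
   Context: A multipole is a cubic "graph with dangling edges": each edge is either a link (joining two vertices) or a dangling edge (with only one end incident with a vertex). Cutting an edge $uv$ into a pair of dangling edges means deleting $uv$ and attaching one new dangling edge to $u$ and one to $v$. A perfect matching of a multipole is a set of links and dangling edges such that every vertex is incident with exactly one of them. *)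

theory Defs
  imports Main
begin

definition petersen_verts :: "nat set" where
  "petersen_verts = {0..<10}"

definition petersen_edges :: "nat set set" where
  "petersen_edges =
     {{i, (i + 1) mod 5} | i. i < 5}
   \<union> {{i, i + 5} | i. i < 5}
   \<union> {{5 + i, 5 + ((i + 2) mod 5)} | i. i < 5}"

text \<open>Edges of a multipole: a link joins the two vertices of a 2-set; a dangling
  edge is incident with a single vertex.\<close>
datatype medge = Link "nat set" | Dangling nat

fun ends :: "medge \<Rightarrow> nat set" where
  "ends (Link s) = s"
| "ends (Dangling v) = {v}"

fun is_link :: "medge \<Rightarrow> bool" where
  "is_link (Link _) = True"
| "is_link (Dangling _) = False"

definition cut_edges :: "nat set \<Rightarrow> medge set" where
  "cut_edges e = Link ` (petersen_edges - {e}) \<union> Dangling ` e"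

definition dangling_of :: "nat set \<Rightarrow> medge set" where
  "dangling_of e = Dangling ` e"

definition links_of :: "medge set \<Rightarrow> medge set" where
  "links_of E = {x \<in> E. is_link x}"

definition perfect_matching :: "nat set \<Rightarrow> medge set \<Rightarrow> medge set \<Rightarrow> bool" where
  "perfect_matching V E M \<longleftrightarrow> M \<subseteq> E \<and> (\<forall>v\<in>V. \<exists>!x. x \<in> M \<and> v \<in> ends x)"

end

theory Submission
  imports Defs
begin

definition EP :: "nat set set" where "EP = {{0,1},{1,2},{2,3},{3,4},{4,0},{0,5},{1,6},{2,7},{3,8},{4,9},{5,7},{6,8},{7,9},{8,5},{9,6}}"
definition P1 :: "nat set set" where "P1 = {{0,1},{2,3},{4,9},{5,7},{6,8}}"
definition P2 :: "nat set set" where "P2 = {{0,1},{3,4},{2,7},{8,5},{9,6}}"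
definition P3 :: "nat set set" where "P3 = {{1,2},{3,4},{0,5},{6,8},{7,9}}"
definition P4 :: "nat set set" where "P4 = {{1,2},{4,0},{3,8},{5,7},{9,6}}"
definition P5 :: "nat set set" where "P5 = {{2,3},{4,0},{1,6},{7,9},{8,5}}"
definition P6 :: "nat set set" where "P6 = {{0,5},{1,6},{2,7},{3,8},{4,9}}"
lemmas P_defs = P1_def P2_def P3_def P4_def P5_def P6_def
lemma prop6:
  assumes "(b0 \<or> b4 \<or> b5) \<and> \<not>(b0 \<and> b4) \<and> \<not>(b0 \<and> b5) \<and> \<not>(b4 \<and> b5)"
    and "(b0 \<or> b1 \<or> b6) \<and> \<not>(b0 \<and> b1) \<and> \<not>(b0 \<and> b6) \<and> \<not>(b1 \<and> b6)"
    and "(b1 \<or> b2 \<or> b7) \<and> \<not>(b1 \<and> b2) \<and> \<not>(b1 \<and> b7) \<and> \<not>(b2 \<and> b7)"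
    and "(b2 \<or> b3 \<or> b8) \<and> \<not>(b2 \<and> b3) \<and> \<not>(b2 \<and> b8) \<and> \<not>(b3 \<and> b8)"
    and "(b3 \<or> b4 \<or> b9) \<and> \<not>(b3 \<and> b4) \<and> \<not>(b3 \<and> b9) \<and> \<not>(b4 \<and> b9)"
    and "(b5 \<or> b10 \<or> b13) \<and> \<not>(b5 \<and> b10) \<and> \<not>(b5 \<and> b13) \<and> \<not>(b10 \<and> b13)"
    and "(b6 \<or> b11 \<or> b14) \<and> \<not>(b6 \<and> b11) \<and> \<not>(b6 \<and> b14) \<and> \<not>(b11 \<and> b14)"
    and "(b7 \<or> b10 \<or> b12) \<and> \<not>(b7 \<and> b10) \<and> \<not>(b7 \<and> b12) \<and> \<not>(b10 \<and> b12)"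
    and "(b8 \<or> b11 \<or> b13) \<and> \<not>(b8 \<and> b11) \<and> \<not>(b8 \<and> b13) \<and> \<not>(b11 \<and> b13)"
    and "(b9 \<or> b12 \<or> b14) \<and> \<not>(b9 \<and> b12) \<and> \<not>(b9 \<and> b14) \<and> \<not>(b12 \<and> b14)"
  shows "(b0 \<and> \<not>b1 \<and> b2 \<and> \<not>b3 \<and> \<not>b4 \<and> \<not>b5 \<and> \<not>b6 \<and> \<not>b7 \<and> \<not>b8 \<and> b9 \<and> b10 \<and> b11 \<and> \<not>b12 \<and> \<not>b13 \<and> \<not>b14) \<or>
    (b0 \<and> \<not>b1 \<and> \<not>b2 \<and> b3 \<and> \<not>b4 \<and> \<not>b5 \<and> \<not>b6 \<and> b7 \<and> \<not>b8 \<and> \<not>b9 \<and> \<not>b10 \<and> \<not>b11 \<and> \<not>b12 \<and> b13 \<and> b14) \<or>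
    (\<not>b0 \<and> b1 \<and> \<not>b2 \<and> b3 \<and> \<not>b4 \<and> b5 \<and> \<not>b6 \<and> \<not>b7 \<and> \<not>b8 \<and> \<not>b9 \<and> \<not>b10 \<and> b11 \<and> b12 \<and> \<not>b13 \<and> \<not>b14) \<or>
    (\<not>b0 \<and> b1 \<and> \<not>b2 \<and> \<not>b3 \<and> b4 \<and> \<not>b5 \<and> \<not>b6 \<and> \<not>b7 \<and> b8 \<and> \<not>b9 \<and> b10 \<and> \<not>b11 \<and> \<not>b12 \<and> \<not>b13 \<and> b14) \<or>
    (\<not>b0 \<and> \<not>b1 \<and> b2 \<and> \<not>b3 \<and> b4 \<and> \<not>b5 \<and> b6 \<and> \<not>b7 \<and> \<not>b8 \<and> \<not>b9 \<and> \<not>b10 \<and> \<not>b11 \<and> b12 \<and> b13 \<and> \<not>b14) \<or>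
    (\<not>b0 \<and> \<not>b1 \<and> \<not>b2 \<and> \<not>b3 \<and> \<not>b4 \<and> b5 \<and> b6 \<and> b7 \<and> b8 \<and> b9 \<and> \<not>b10 \<and> \<not>b11 \<and> \<not>b12 \<and> \<not>b13 \<and> \<not>b14)"
  using assms by sat
lemma inc0: "\<forall>x\<in>EP. 0\<in>x \<longrightarrow> x = ({0,1}::nat set) \<or> x = ({4,0}::nat set) \<or> x = ({0,5}::nat set)" "0 \<in> ({0,1}::nat set)" "0 \<in> ({4,0}::nat set)" "0 \<in> ({0,5}::nat set)" "({0,1}::nat set) \<noteq> ({4,0}::nat set)" "({0,1}::nat set) \<noteq> ({0,5}::nat set)" "({4,0}::nat set) \<noteq> ({0,5}::nat set)"
  by (simp_all add: EP_def doubleton_eq_iff)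
lemma inc1: "\<forall>x\<in>EP. 1\<in>x \<longrightarrow> x = ({0,1}::nat set) \<or> x = ({1,2}::nat set) \<or> x = ({1,6}::nat set)" "1 \<in> ({0,1}::nat set)" "1 \<in> ({1,2}::nat set)" "1 \<in> ({1,6}::nat set)" "({0,1}::nat set) \<noteq> ({1,2}::nat set)" "({0,1}::nat set) \<noteq> ({1,6}::nat set)" "({1,2}::nat set) \<noteq> ({1,6}::nat set)"
  by (simp_all add: EP_def doubleton_eq_iff)
lemma inc2: "\<forall>x\<in>EP. 2\<in>x \<longrightarrow> x = ({1,2}::nat set) \<or> x = ({2,3}::nat set) \<or> x = ({2,7}::nat set)" "2 \<in> ({1,2}::nat set)" "2 \<in> ({2,3}::nat set)" "2 \<in> ({2,7}::nat set)" "({1,2}::nat set) \<noteq> ({2,3}::nat set)" "({1,2}::nat set) \<noteq> ({2,7}::nat set)" "({2,3}::nat set) \<noteq> ({2,7}::nat set)"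
  by (simp_all add: EP_def doubleton_eq_iff)
lemma inc3: "\<forall>x\<in>EP. 3\<in>x \<longrightarrow> x = ({2,3}::nat set) \<or> x = ({3,4}::nat set) \<or> x = ({3,8}::nat set)" "3 \<in> ({2,3}::nat set)" "3 \<in> ({3,4}::nat set)" "3 \<in> ({3,8}::nat set)" "({2,3}::nat set) \<noteq> ({3,4}::nat set)" "({2,3}::nat set) \<noteq> ({3,8}::nat set)" "({3,4}::nat set) \<noteq> ({3,8}::nat set)"
  by (simp_all add: EP_def doubleton_eq_iff)
lemma inc4: "\<forall>x\<in>EP. 4\<in>x \<longrightarrow> x = ({3,4}::nat set) \<or> x = ({4,0}::nat set) \<or> x = ({4,9}::nat set)" "4 \<in> ({3,4}::nat set)" "4 \<in> ({4,0}::nat set)" "4 \<in> ({4,9}::nat set)" "({3,4}::nat set) \<noteq> ({4,0}::nat set)" "({3,4}::nat set) \<noteq> ({4,9}::nat set)" "({4,0}::nat set) \<noteq> ({4,9}::nat set)"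
  by (simp_all add: EP_def doubleton_eq_iff)
lemma inc5: "\<forall>x\<in>EP. 5\<in>x \<longrightarrow> x = ({0,5}::nat set) \<or> x = ({5,7}::nat set) \<or> x = ({8,5}::nat set)" "5 \<in> ({0,5}::nat set)" "5 \<in> ({5,7}::nat set)" "5 \<in> ({8,5}::nat set)" "({0,5}::nat set) \<noteq> ({5,7}::nat set)" "({0,5}::nat set) \<noteq> ({8,5}::nat set)" "({5,7}::nat set) \<noteq> ({8,5}::nat set)"
  by (simp_all add: EP_def doubleton_eq_iff)
lemma inc6: "\<forall>x\<in>EP. 6\<in>x \<longrightarrow> x = ({1,6}::nat set) \<or> x = ({6,8}::nat set) \<or> x = ({9,6}::nat set)" "6 \<in> ({1,6}::nat set)" "6 \<in> ({6,8}::nat set)" "6 \<in> ({9,6}::nat set)" "({1,6}::nat set) \<noteq> ({6,8}::nat set)" "({1,6}::nat set) \<noteq> ({9,6}::nat set)" "({6,8}::nat set) \<noteq> ({9,6}::nat set)"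
  by (simp_all add: EP_def doubleton_eq_iff)
lemma inc7: "\<forall>x\<in>EP. 7\<in>x \<longrightarrow> x = ({2,7}::nat set) \<or> x = ({5,7}::nat set) \<or> x = ({7,9}::nat set)" "7 \<in> ({2,7}::nat set)" "7 \<in> ({5,7}::nat set)" "7 \<in> ({7,9}::nat set)" "({2,7}::nat set) \<noteq> ({5,7}::nat set)" "({2,7}::nat set) \<noteq> ({7,9}::nat set)" "({5,7}::nat set) \<noteq> ({7,9}::nat set)"
  by (simp_all add: EP_def doubleton_eq_iff)
lemma inc8: "\<forall>x\<in>EP. 8\<in>x \<longrightarrow> x = ({3,8}::nat set) \<or> x = ({6,8}::nat set) \<or> x = ({8,5}::nat set)" "8 \<in> ({3,8}::nat set)" "8 \<in> ({6,8}::nat set)" "8 \<in> ({8,5}::nat set)" "({3,8}::nat set) \<noteq> ({6,8}::nat set)" "({3,8}::nat set) \<noteq> ({8,5}::nat set)" "({6,8}::nat set) \<noteq> ({8,5}::nat set)"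
  by (simp_all add: EP_def doubleton_eq_iff)
lemma inc9: "\<forall>x\<in>EP. 9\<in>x \<longrightarrow> x = ({4,9}::nat set) \<or> x = ({7,9}::nat set) \<or> x = ({9,6}::nat set)" "9 \<in> ({4,9}::nat set)" "9 \<in> ({7,9}::nat set)" "9 \<in> ({9,6}::nat set)" "({4,9}::nat set) \<noteq> ({7,9}::nat set)" "({4,9}::nat set) \<noteq> ({9,6}::nat set)" "({7,9}::nat set) \<noteq> ({9,6}::nat set)"
  by (simp_all add: EP_def doubleton_eq_iff)
lemma five: "{f i |i. i < (5::nat)} = {f 0, f 1, f 2, f 3, f 4}"
  by (auto simp: less_Suc_eq numeral_eq_Suc)

lemma PE1: "{{i, (i+1) mod 5} |i. i<(5::nat)} = {{0,1},{1,2},{2,3},{3,4},{4,0}}"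
  unfolding five by (simp add: numeral_2_eq_2)
lemma PE2: "{{i, i+5} |i. i<(5::nat)} = {{0,5},{1,6},{2,7},{3,8},{4,9}}"
  unfolding five by simp
lemma PE3: "{{5+i, 5 + (i+2) mod 5} |i. i<(5::nat)} = {{5,7},{6,8},{7,9},{8,5},{9,6}}"
  unfolding five by simp
lemma PE: "petersen_edges = EP"
  unfolding petersen_edges_def PE1 PE2 PE3 EP_def by (simp only: Un_insert_left Un_empty_left)

lemma EP_cases: "x \<in> EP \<Longrightarrow> x = {0,1} \<or> x = {1,2} \<or> x = {2,3} \<or> x = {3,4} \<or> x = {4,0} \<or> x = {0,5} \<or> x = {1,6} \<or> x = {2,7} \<or> x = {3,8} \<or> x = {4,9} \<or> x = {5,7} \<or> x = {6,8} \<or> x = {7,9} \<or> x = {8,5} \<or> x = {9,6}"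
  unfolding EP_def by (simp only: insert_iff empty_iff simp_thms)

lemma set_from_lits: "N \<subseteq> EP \<Longrightarrow> \<forall>x\<in>EP. x \<in> N \<longleftrightarrow> x \<in> P \<Longrightarrow> P \<subseteq> EP \<Longrightarrow> N = P"
  by blast

definition pmP :: "nat set set \<Rightarrow> bool" where
  "pmP N \<longleftrightarrow> N \<subseteq> EP \<and> (\<forall>w<10. \<exists>!x. x\<in>N \<and> w\<in>x)"

lemma ex1_3:
  assumes "N \<subseteq> EP" "\<exists>!x. x\<in>N \<and> w\<in>x" "\<forall>x\<in>EP. w\<in>x \<longrightarrow> x = a \<or> x = b \<or> x = c"
    "w\<in>a" "w\<in>b" "w\<in>c" "a\<noteq>b" "a\<noteq>c" "b\<noteq>c"
  shows "(a\<in>N \<or> b\<in>N \<or> c\<in>N) \<and> \<not>(a\<in>N\<and>b\<in>N) \<and> \<not>(a\<in>N\<and>c\<in>N) \<and> \<not>(b\<in>N\<and>c\<in>N)"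
proof -
  from assms(2) obtain x where "x\<in>N" "w\<in>x" by blast
  then have "x = a \<or> x = b \<or> x = c" using assms(1,3) by blast
  then show ?thesis using assms(2,4-9) \<open>x\<in>N\<close> by blast
qed

lemma pmP_cases:
  assumes "pmP N" shows "N = P1 \<or> N = P2 \<or> N = P3 \<or> N = P4 \<or> N = P5 \<or> N = P6"
proof -
  have sub: "N \<subseteq> EP" and u: "\<And>w. w<10 \<Longrightarrow> \<exists>!x. x\<in>N \<and> w\<in>x" using assms by (auto simp: pmP_def)
  have u0: "\<exists>!x. x\<in>N \<and> (0::nat)\<in>x" by (rule u) simp
  note c0 = ex1_3[OF sub u0 inc0]
  have u1: "\<exists>!x. x\<in>N \<and> (1::nat)\<in>x" by (rule u) simp
  note c1 = ex1_3[OF sub u1 inc1]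
  have u2: "\<exists>!x. x\<in>N \<and> (2::nat)\<in>x" by (rule u) simp
  note c2 = ex1_3[OF sub u2 inc2]
  have u3: "\<exists>!x. x\<in>N \<and> (3::nat)\<in>x" by (rule u) simp
  note c3 = ex1_3[OF sub u3 inc3]
  have u4: "\<exists>!x. x\<in>N \<and> (4::nat)\<in>x" by (rule u) simp
  note c4 = ex1_3[OF sub u4 inc4]
  have u5: "\<exists>!x. x\<in>N \<and> (5::nat)\<in>x" by (rule u) simp
  note c5 = ex1_3[OF sub u5 inc5]
  have u6: "\<exists>!x. x\<in>N \<and> (6::nat)\<in>x" by (rule u) simp
  note c6 = ex1_3[OF sub u6 inc6]
  have u7: "\<exists>!x. x\<in>N \<and> (7::nat)\<in>x" by (rule u) simp
  note c7 = ex1_3[OF sub u7 inc7]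
  have u8: "\<exists>!x. x\<in>N \<and> (8::nat)\<in>x" by (rule u) simp
  note c8 = ex1_3[OF sub u8 inc8]
  have u9: "\<exists>!x. x\<in>N \<and> (9::nat)\<in>x" by (rule u) simp
  note c9 = ex1_3[OF sub u9 inc9]
  from prop6[OF c0 c1 c2 c3 c4 c5 c6 c7 c8 c9]
  show ?thesis
    apply (elim disjE)
    subgoal by (rule disjI1, rule set_from_lits[OF sub]) (simp_all add: EP_def P_defs doubleton_eq_iff)
    subgoal by (rule disjI2, rule disjI1, rule set_from_lits[OF sub]) (simp_all add: EP_def P_defs doubleton_eq_iff)
    subgoal by (rule disjI2, rule disjI2, rule disjI1, rule set_from_lits[OF sub]) (simp_all add: EP_def P_defs doubleton_eq_iff)
    subgoal by (rule disjI2, rule disjI2, rule disjI2, rule disjI1, rule set_from_lits[OF sub]) (simp_all add: EP_def P_defs doubleton_eq_iff)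
    subgoal by (rule disjI2, rule disjI2, rule disjI2, rule disjI2, rule disjI1, rule set_from_lits[OF sub]) (simp_all add: EP_def P_defs doubleton_eq_iff)
    subgoal by (rule disjI2, rule disjI2, rule disjI2, rule disjI2, rule disjI2, rule set_from_lits[OF sub]) (simp_all add: EP_def P_defs doubleton_eq_iff)
    done
qed


definition PS :: "nat set set set" where "PS = {P1,P2,P3,P4,P5,P6}"

lemma card_U: "N1 \<in> PS \<Longrightarrow> N2 \<in> PS \<Longrightarrow> N3 \<in> PS \<Longrightarrow> card (N1 \<union> N2 \<union> N3) \<le> 12"
  unfolding PS_def insert_iff empty_iff simp_thms
  by (elim disjE; simp add: P_defs doubleton_eq_iff card_insert_if)

lemma exist_b: "e \<in> EP \<Longrightarrow> \<exists>N1\<in>PS. \<exists>N2\<in>PS. \<exists>N3\<in>PS. e \<notin> N1 \<and> e \<notin> N2 \<and> e \<notin> N3 \<and> card (N1 \<union> N2 \<union> N3) = 12"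
  apply (drule EP_cases)
  apply (elim disjE)
  subgoal by (rule bexI[where x=P3], rule bexI[where x=P4], rule bexI[where x=P5]) (simp_all add: PS_def P_defs doubleton_eq_iff card_insert_if)
  subgoal by (rule bexI[where x=P1], rule bexI[where x=P2], rule bexI[where x=P5]) (simp_all add: PS_def P_defs doubleton_eq_iff card_insert_if)
  subgoal by (rule bexI[where x=P2], rule bexI[where x=P3], rule bexI[where x=P4]) (simp_all add: PS_def P_defs doubleton_eq_iff card_insert_if)
  subgoal by (rule bexI[where x=P1], rule bexI[where x=P4], rule bexI[where x=P5]) (simp_all add: PS_def P_defs doubleton_eq_iff card_insert_if)
  subgoal by (rule bexI[where x=P1], rule bexI[where x=P2], rule bexI[where x=P3]) (simp_all add: PS_def P_defs doubleton_eq_iff card_insert_if)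
  subgoal by (rule bexI[where x=P1], rule bexI[where x=P2], rule bexI[where x=P4]) (simp_all add: PS_def P_defs doubleton_eq_iff card_insert_if)
  subgoal by (rule bexI[where x=P1], rule bexI[where x=P2], rule bexI[where x=P3]) (simp_all add: PS_def P_defs doubleton_eq_iff card_insert_if)
  subgoal by (rule bexI[where x=P1], rule bexI[where x=P3], rule bexI[where x=P4]) (simp_all add: PS_def P_defs doubleton_eq_iff card_insert_if)
  subgoal by (rule bexI[where x=P1], rule bexI[where x=P2], rule bexI[where x=P3]) (simp_all add: PS_def P_defs doubleton_eq_iff card_insert_if)
  subgoal by (rule bexI[where x=P2], rule bexI[where x=P3], rule bexI[where x=P4]) (simp_all add: PS_def P_defs doubleton_eq_iff card_insert_if)
  subgoal by (rule bexI[where x=P2], rule bexI[where x=P3], rule bexI[where x=P5]) (simp_all add: PS_def P_defs doubleton_eq_iff card_insert_if)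
  subgoal by (rule bexI[where x=P2], rule bexI[where x=P4], rule bexI[where x=P5]) (simp_all add: PS_def P_defs doubleton_eq_iff card_insert_if)
  subgoal by (rule bexI[where x=P1], rule bexI[where x=P2], rule bexI[where x=P4]) (simp_all add: PS_def P_defs doubleton_eq_iff card_insert_if)
  subgoal by (rule bexI[where x=P1], rule bexI[where x=P3], rule bexI[where x=P4]) (simp_all add: PS_def P_defs doubleton_eq_iff card_insert_if)
  subgoal by (rule bexI[where x=P1], rule bexI[where x=P3], rule bexI[where x=P5]) (simp_all add: PS_def P_defs doubleton_eq_iff card_insert_if)
  done

lemma exist_c: "e \<in> EP \<Longrightarrow> \<exists>N1\<in>PS. \<exists>N2\<in>PS. \<exists>N3\<in>PS. e \<in> N1 \<and> card (N1 \<union> N2 \<union> N3) = 12"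
  apply (drule EP_cases)
  apply (elim disjE)
  subgoal by (rule bexI[where x=P1], rule bexI[where x=P2], rule bexI[where x=P3]) (simp_all add: PS_def P_defs doubleton_eq_iff card_insert_if)
  subgoal by (rule bexI[where x=P3], rule bexI[where x=P1], rule bexI[where x=P2]) (simp_all add: PS_def P_defs doubleton_eq_iff card_insert_if)
  subgoal by (rule bexI[where x=P1], rule bexI[where x=P2], rule bexI[where x=P3]) (simp_all add: PS_def P_defs doubleton_eq_iff card_insert_if)
  subgoal by (rule bexI[where x=P2], rule bexI[where x=P1], rule bexI[where x=P3]) (simp_all add: PS_def P_defs doubleton_eq_iff card_insert_if)
  subgoal by (rule bexI[where x=P4], rule bexI[where x=P1], rule bexI[where x=P2]) (simp_all add: PS_def P_defs doubleton_eq_iff card_insert_if)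
  subgoal by (rule bexI[where x=P3], rule bexI[where x=P1], rule bexI[where x=P2]) (simp_all add: PS_def P_defs doubleton_eq_iff card_insert_if)
  subgoal by (rule bexI[where x=P5], rule bexI[where x=P1], rule bexI[where x=P2]) (simp_all add: PS_def P_defs doubleton_eq_iff card_insert_if)
  subgoal by (rule bexI[where x=P2], rule bexI[where x=P1], rule bexI[where x=P3]) (simp_all add: PS_def P_defs doubleton_eq_iff card_insert_if)
  subgoal by (rule bexI[where x=P4], rule bexI[where x=P1], rule bexI[where x=P2]) (simp_all add: PS_def P_defs doubleton_eq_iff card_insert_if)
  subgoal by (rule bexI[where x=P1], rule bexI[where x=P2], rule bexI[where x=P3]) (simp_all add: PS_def P_defs doubleton_eq_iff card_insert_if)
  subgoal by (rule bexI[where x=P1], rule bexI[where x=P2], rule bexI[where x=P3]) (simp_all add: PS_def P_defs doubleton_eq_iff card_insert_if)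
  subgoal by (rule bexI[where x=P1], rule bexI[where x=P2], rule bexI[where x=P3]) (simp_all add: PS_def P_defs doubleton_eq_iff card_insert_if)
  subgoal by (rule bexI[where x=P3], rule bexI[where x=P1], rule bexI[where x=P2]) (simp_all add: PS_def P_defs doubleton_eq_iff card_insert_if)
  subgoal by (rule bexI[where x=P2], rule bexI[where x=P1], rule bexI[where x=P3]) (simp_all add: PS_def P_defs doubleton_eq_iff card_insert_if)
  subgoal by (rule bexI[where x=P2], rule bexI[where x=P1], rule bexI[where x=P3]) (simp_all add: PS_def P_defs doubleton_eq_iff card_insert_if)
  done


definition phi :: "nat set \<Rightarrow> nat set set \<Rightarrow> medge set" where
  "phi e N = Link ` (N - {e}) \<union> (if e \<in> N then Dangling ` e else {})"

lemma EP_shape: "x \<in> EP \<Longrightarrow> \<exists>a b. x = {a,b} \<and> a \<noteq> b \<and> a < 10 \<and> b < 10"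
  apply (drule EP_cases)
  apply (elim disjE)
  apply (hypsubst, rule exI, rule exI, rule conjI, rule refl, simp)+
  done

lemma EP_sub: "x \<in> EP \<Longrightarrow> x \<subseteq> {0..<10}"
proof -
  assume "x \<in> EP"
  then obtain a b where "x = {a,b}" "a < 10" "b < 10" using EP_shape by blast
  then show ?thesis by auto
qed

lemma EP_card: "x \<in> EP \<Longrightarrow> card x = 2"
proof -
  assume "x \<in> EP"
  then obtain a b where "x = {a,b}" "a \<noteq> b" using EP_shape by blast
  then show ?thesis by auto
qed

lemma cut_eq: "cut_edges e = Link ` (EP - {e}) \<union> Dangling ` e"
  unfolding cut_edges_def PE ..

lemma ex1_two: "\<exists>!x. P x \<Longrightarrow> P a \<Longrightarrow> P b \<Longrightarrow> a = b" by blast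

lemma pm_to_N:
  assumes e: "e \<in> EP" and pm: "perfect_matching petersen_verts (cut_edges e) M"
  shows "\<exists>N. pmP N \<and> M = phi e N"
proof -
  obtain u v where uv: "e = {u,v}" "u \<noteq> v" "u < 10" "v < 10" using EP_shape[OF e] by blast
  have Msub: "M \<subseteq> Link ` (EP - {e}) \<union> Dangling ` e" using pm by (simp add: perfect_matching_def cut_eq)
  have uniq: "\<And>w. w < 10 \<Longrightarrow> \<exists>!y. y \<in> M \<and> w \<in> ends y"
    using pm by (simp add: perfect_matching_def petersen_verts_def)
  define L where "L = {x. Link x \<in> M}"
  define D where "D = {w. Dangling w \<in> M}"
  have LE: "L \<subseteq> EP - {e}" using Msub by (auto simp: L_def)
  have De: "D \<subseteq> e" using Msub by (auto simp: D_def)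
  have Meq: "M = Link ` L \<union> Dangling ` D"
  proof
    show "M \<subseteq> Link ` L \<union> Dangling ` D"
    proof
      fix y assume "y \<in> M" then show "y \<in> Link ` L \<union> Dangling ` D"
        by (cases y) (auto simp: L_def D_def)
    qed
  qed (auto simp: L_def D_def)
  have disj: "x = y" if "x \<in> L" "y \<in> L" "w \<in> x" "w \<in> y" for x y w
  proof -
    have "w < 10" using EP_sub LE that(1,3) by fastforce
    moreover have "Link x \<in> M \<and> w \<in> ends (Link x)" "Link y \<in> M \<and> w \<in> ends (Link y)"
      using that by (auto simp: L_def)
    ultimately have "Link x = Link y" using uniq ex1_two by metis
    then show ?thesis by simp
  qed
  have cover: "\<exists>x\<in>L. w \<in> x" if "w < 10" "w \<notin> D" for w
  proof -
    from uniq[OF that(1)] obtain y where y: "y \<in> M" "w \<in> ends y" by blast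
    then show ?thesis using that(2) by (cases y) (auto simp: L_def D_def)
  qed
  have notcover: "\<not> (\<exists>x\<in>L. w \<in> x)" if "w \<in> D" for w
  proof
    assume "\<exists>x\<in>L. w \<in> x"
    then obtain x where x: "x \<in> L" "w \<in> x" by blast
    have "w < 10" using De that uv by auto
    moreover have "Link x \<in> M \<and> w \<in> ends (Link x)" "Dangling w \<in> M \<and> w \<in> ends (Dangling w)"
      using x that by (auto simp: L_def D_def)
    ultimately have "Link x = Dangling w" using uniq ex1_two by metis
    then show False by simp
  qed
  have "finite EP" by (simp add: EP_def)
  then have finL: "finite L" using LE finite_subset by blast
  have UL: "\<Union>L = {0..<10} - D"
  proof
    show "\<Union>L \<subseteq> {0..<10} - D"
    proof
      fix w assume "w \<in> \<Union>L"
      then obtain x where x: "x \<in> L" "w \<in> x" by blast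
      then have "w \<in> {0..<10}" using EP_sub LE by blast
      moreover have "w \<notin> D" using notcover x by blast
      ultimately show "w \<in> {0..<10} - D" by blast
    qed
    show "{0..<10} - D \<subseteq> \<Union>L"
    proof
      fix w assume "w \<in> {0..<10} - D"
      then have "w < 10" "w \<notin> D" by auto
      then show "w \<in> \<Union>L" using cover by blast
    qed
  qed
  have pw: "pairwise disjnt L"
    unfolding pairwise_def disjnt_def using disj by blast
  have "card (\<Union>L) = sum card L"
    by (rule card_Union_disjoint[OF pw]) (meson LE EP_sub DiffD1 finite_atLeastLessThan finite_subset subsetD)
  also have "\<dots> = sum (\<lambda>_. 2) L"
    by (rule sum.cong) (use EP_card LE in auto)
  also have "\<dots> = 2 * card L" by simp
  finally have c1: "card ({0..<10::nat} - D) = 2 * card L" using UL by simp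
  have finD: "finite D" using De uv finite_subset by auto
  have c2: "card ({0..<10::nat} - D) = 10 - card D"
  proof -
    have "D \<subseteq> {0..<10}" using De uv by auto
    then show ?thesis using finD by (simp add: card_Diff_subset)
  qed
  have Dcases: "D = {} \<or> D = e"
  proof (rule ccontr)
    assume "\<not> (D = {} \<or> D = e)"
    then have "D = {u} \<or> D = {v}" using De uv by auto
    then have "card D = 1" by auto
    then have "9 = 2 * card L" using c1 c2 by simp
    then show False by presburger
  qed
  define N where "N = L \<union> (if D = e then {e} else {})"
  have eL: "e \<notin> L" using LE by auto
  have "pmP N"
    unfolding pmP_def
  proof (intro conjI allI impI)
    show "N \<subseteq> EP" using LE e by (auto simp: N_def)
    fix w :: nat assume w: "w < 10"
    show "\<exists>!x. x \<in> N \<and> w \<in> x"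
    proof (cases "D = e")
      case True
      show ?thesis
      proof (cases "w \<in> e")
        case True
        then show ?thesis using notcover \<open>D = e\<close> by (auto simp: N_def)
      next
        case False
        then obtain x where "x \<in> L" "w \<in> x" using cover w \<open>D = e\<close> by blast
        then show ?thesis using disj False \<open>D = e\<close> by (auto simp: N_def)
      qed
    next
      case False
      then have "D = {}" using Dcases by simp
      then obtain x where "x \<in> L" "w \<in> x" using cover w by blast
      then show ?thesis using disj False by (auto simp: N_def)
    qed
  qed
  moreover have "M = phi e N"
    using Dcases eL uv unfolding Meq phi_def N_def by auto
  ultimately show ?thesis by blast
qed

lemma N_to_pm:
  assumes e: "e \<in> EP" and N: "pmP N"
  shows "perfect_matching petersen_verts (cut_edges e) (phi e N)"
proof -
  have NE: "N \<subseteq> EP" and uniq: "\<And>w. w < 10 \<Longrightarrow> \<exists>!x. x \<in> N \<and> w \<in> x" using N by (auto simp: pmP_def)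
  have "phi e N \<subseteq> cut_edges e" using NE by (auto simp: phi_def cut_eq)
  moreover have "\<exists>!y. y \<in> phi e N \<and> w \<in> ends y" if w: "w < 10" for w
  proof -
    from uniq[OF w] obtain x where x: "x \<in> N" "w \<in> x" and xu: "\<And>y. y \<in> N \<Longrightarrow> w \<in> y \<Longrightarrow> y = x" by blast
    show ?thesis
    proof (cases "x = e")
      case True
      show ?thesis
      proof (rule ex1I[of _ "Dangling w"])
        show "Dangling w \<in> phi e N \<and> w \<in> ends (Dangling w)" using True x by (auto simp: phi_def)
        fix y assume y: "y \<in> phi e N \<and> w \<in> ends y"
        then show "y = Dangling w" using xu True by (cases y) (auto simp: phi_def split: if_splits)
      qed
    next
      case False
      show ?thesis
      proof (rule ex1I[of _ "Link x"])
        show "Link x \<in> phi e N \<and> w \<in> ends (Link x)" using False x by (auto simp: phi_def)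
        fix y assume y: "y \<in> phi e N \<and> w \<in> ends y"
        then show "y = Link x" using xu False by (cases y) (auto simp: phi_def split: if_splits)
      qed
    qed
  qed
  ultimately show ?thesis by (auto simp: perfect_matching_def petersen_verts_def)
qed


lemma lt10: "(w::nat) < 10 \<Longrightarrow> w=0 \<or> w=1 \<or> w=2 \<or> w=3 \<or> w=4 \<or> w=5 \<or> w=6 \<or> w=7 \<or> w=8 \<or> w=9"
  by presburger

lemma lt10': "(w::nat) < 10 \<Longrightarrow> w=0 \<or> w=Suc 0 \<or> w=2 \<or> w=3 \<or> w=4 \<or> w=5 \<or> w=6 \<or> w=7 \<or> w=8 \<or> w=9"
  by (drule lt10, unfold One_nat_def, assumption)

lemma pmP_intro:
  assumes "N \<subseteq> EP" "\<forall>x\<in>N. \<forall>y\<in>N. x \<noteq> y \<longrightarrow> x \<inter> y = {}"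
    "\<And>w. w < 10 \<Longrightarrow> \<exists>x\<in>N. w \<in> x"
  shows "pmP N"
  unfolding pmP_def
proof (intro conjI allI impI)
  show "N \<subseteq> EP" by (rule assms(1))
  fix w :: nat assume "w < 10"
  then obtain x where x: "x \<in> N" "w \<in> x" using assms(3) by blast
  show "\<exists>!x. x \<in> N \<and> w \<in> x"
  proof (rule ex1I[of _ x])
    show "x \<in> N \<and> w \<in> x" using x by blast
    fix y assume y: "y \<in> N \<and> w \<in> y"
    show "y = x"
    proof (rule ccontr)
      assume "y \<noteq> x"
      then have "y \<inter> x = {}" using assms(2) x y by blast
      then show False using x y by blast
    qed
  qed
qed

lemma PS_pmP: "N \<in> PS \<Longrightarrow> pmP N"
  unfolding PS_def insert_iff empty_iff simp_thms
  apply (elim disjE; hypsubst; rule pmP_intro)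
  apply (simp_all add: P_defs EP_def doubleton_eq_iff)
  apply (drule lt10', blast)+
  done


lemma EP_fin: "finite EP" by (simp add: EP_def)

lemma EP_card15: "card EP = 15"
  by (simp add: EP_def doubleton_eq_iff card_insert_if)

lemma PS_sub: "N \<in> PS \<Longrightarrow> N \<subseteq> EP"
  using PS_pmP pmP_def by blast

lemma card_rest:
  assumes "e \<in> EP" "U \<subseteq> EP"
  shows "card (EP - {e} - U) = 15 - (card U + (if e \<in> U then 0 else 1))"
proof -
  have fU: "finite U" using assms(2) EP_fin finite_subset by blast
  have "EP - {e} - U = EP - insert e U" by blast
  moreover have "card (EP - insert e U) = card EP - card (insert e U)"
    using assms EP_fin by (intro card_Diff_subset) (auto intro: finite_subset)
  moreover have "card (insert e U) = card U + (if e \<in> U then 0 else 1)"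
    using fU by (simp add: card_insert_if)
  ultimately show ?thesis using EP_card15 by simp
qed

lemma Link_mem: "Link x \<in> Link ` A \<longleftrightarrow> x \<in> A" by auto
lemma Link_nD: "Link x \<notin> Dangling ` A" by auto
lemma D_nLink: "Dangling x \<notin> Link ` A" by auto

lemma links_diff:
  "links_of (cut_edges e) - (phi e N1 \<union> phi e N2 \<union> phi e N3) = Link ` (EP - {e} - (N1 \<union> N2 \<union> N3))"
proof (rule set_eqI)
  fix y
  show "y \<in> links_of (cut_edges e) - (phi e N1 \<union> phi e N2 \<union> phi e N3) \<longleftrightarrow> y \<in> Link ` (EP - {e} - (N1 \<union> N2 \<union> N3))"
  proof (cases y)
    case (Link x)
    then show ?thesis
      by (simp add: links_of_def cut_eq phi_def Link_mem Link_nD) blast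
  next
    case (Dangling w)
    then show ?thesis by (simp add: links_of_def D_nLink)
  qed
qed

lemma card_links_diff:
  "card (links_of (cut_edges e) - (phi e N1 \<union> phi e N2 \<union> phi e N3)) = card (EP - {e} - (N1 \<union> N2 \<union> N3))"
  unfolding links_diff by (rule card_image) (simp add: inj_on_def)

theorem lemma1:
  assumes "e \<in> petersen_edges"
  defines "pm \<equiv> perfect_matching petersen_verts (cut_edges e)"
  shows
    "(\<forall>M. pm M \<longrightarrow> dangling_of e \<subseteq> M \<or> M \<inter> dangling_of e = {})
   \<and> (\<forall>M1 M2 M3. pm M1 \<and> pm M2 \<and> pm M3
          \<and> M1 \<inter> dangling_of e = {} \<and> M2 \<inter> dangling_of e = {} \<and> M3 \<inter> dangling_of e = {}
          \<longrightarrow> card (links_of (cut_edges e) - (M1 \<union> M2 \<union> M3)) \<ge> 2)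
   \<and> (\<exists>M1 M2 M3. pm M1 \<and> pm M2 \<and> pm M3
          \<and> M1 \<inter> dangling_of e = {} \<and> M2 \<inter> dangling_of e = {} \<and> M3 \<inter> dangling_of e = {}
          \<and> card (links_of (cut_edges e) - (M1 \<union> M2 \<union> M3)) = 2)
   \<and> (\<forall>M1 M2 M3. pm M1 \<and> pm M2 \<and> pm M3
          \<and> (M1 \<inter> dangling_of e \<noteq> {} \<or> M2 \<inter> dangling_of e \<noteq> {} \<or> M3 \<inter> dangling_of e \<noteq> {})
          \<longrightarrow> card (links_of (cut_edges e) - (M1 \<union> M2 \<union> M3)) \<ge> 3)
   \<and> (\<exists>M1 M2 M3. pm M1 \<and> pm M2 \<and> pm M3
          \<and> (M1 \<inter> dangling_of e \<noteq> {} \<or> M2 \<inter> dangling_of e \<noteq> {} \<or> M3 \<inter> dangling_of e \<noteq> {})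
          \<and> card (links_of (cut_edges e) - (M1 \<union> M2 \<union> M3)) = 3)"
proof -
  have e: "e \<in> EP" using assms(1) PE by simp
  obtain u v where uv: "e = {u,v}" using EP_shape[OF e] by blast
  have char: "\<exists>N\<in>PS. M = phi e N" if pmM: "pm M" for M
  proof -
    obtain N where "pmP N" "M = phi e N" using pm_to_N[OF e] pmM unfolding pm_def by blast
    moreover have "N \<in> PS" using pmP_cases[OF \<open>pmP N\<close>] unfolding PS_def by blast
    ultimately show ?thesis by blast
  qed
  have bk: "pm (phi e N)" if "N \<in> PS" for N
    unfolding pm_def by (rule N_to_pm[OF e PS_pmP[OF that]])
  have dang0: "phi e N \<inter> dangling_of e = {} \<longleftrightarrow> e \<notin> N" for N
    using uv by (auto simp: phi_def dangling_of_def)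
  have dang1: "dangling_of e \<subseteq> phi e N" if "e \<in> N" for N
    using that by (auto simp: phi_def dangling_of_def)
  have cnt: "card (links_of (cut_edges e) - (phi e N1 \<union> phi e N2 \<union> phi e N3)) =
      15 - (card (N1 \<union> N2 \<union> N3) + (if e \<in> N1 \<union> N2 \<union> N3 then 0 else 1))"
    if "N1 \<in> PS" "N2 \<in> PS" "N3 \<in> PS" for N1 N2 N3
  proof -
    have "N1 \<union> N2 \<union> N3 \<subseteq> EP" using PS_sub that by blast
    then show ?thesis unfolding card_links_diff by (rule card_rest[OF e])
  qed
  have A: "\<forall>M. pm M \<longrightarrow> dangling_of e \<subseteq> M \<or> M \<inter> dangling_of e = {}"
  proof (intro allI impI)
    fix M assume "pm M"
    then obtain N where "M = phi e N" using char by blast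
    then show "dangling_of e \<subseteq> M \<or> M \<inter> dangling_of e = {}"
      using dang0 dang1 by (cases "e \<in> N") auto
  qed
  have B: "\<forall>M1 M2 M3. pm M1 \<and> pm M2 \<and> pm M3
          \<and> M1 \<inter> dangling_of e = {} \<and> M2 \<inter> dangling_of e = {} \<and> M3 \<inter> dangling_of e = {}
          \<longrightarrow> card (links_of (cut_edges e) - (M1 \<union> M2 \<union> M3)) \<ge> 2"
  proof (intro allI impI)
    fix M1 M2 M3
    assume h: "pm M1 \<and> pm M2 \<and> pm M3
          \<and> M1 \<inter> dangling_of e = {} \<and> M2 \<inter> dangling_of e = {} \<and> M3 \<inter> dangling_of e = {}"
    then obtain N1 N2 N3 where N: "N1 \<in> PS" "N2 \<in> PS" "N3 \<in> PS"
      "M1 = phi e N1" "M2 = phi e N2" "M3 = phi e N3" using char by meson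
    then have "e \<notin> N1 \<union> N2 \<union> N3" using h dang0 by auto
    moreover have "card (N1 \<union> N2 \<union> N3) \<le> 12" using card_U N by blast
    ultimately show "card (links_of (cut_edges e) - (M1 \<union> M2 \<union> M3)) \<ge> 2"
      using cnt[OF N(1-3)] N(4-6) by simp
  qed
  have C: "\<exists>M1 M2 M3. pm M1 \<and> pm M2 \<and> pm M3
          \<and> M1 \<inter> dangling_of e = {} \<and> M2 \<inter> dangling_of e = {} \<and> M3 \<inter> dangling_of e = {}
          \<and> card (links_of (cut_edges e) - (M1 \<union> M2 \<union> M3)) = 2"
  proof -
    obtain N1 N2 N3 where N: "N1 \<in> PS" "N2 \<in> PS" "N3 \<in> PS" "e \<notin> N1" "e \<notin> N2" "e \<notin> N3"
      "card (N1 \<union> N2 \<union> N3) = 12" using exist_b[OF e] by blast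
    show ?thesis
      apply (rule exI[of _ "phi e N1"], rule exI[of _ "phi e N2"], rule exI[of _ "phi e N3"])
      using N bk dang0 cnt[OF N(1-3)] by simp
  qed
  have D: "\<forall>M1 M2 M3. pm M1 \<and> pm M2 \<and> pm M3
          \<and> (M1 \<inter> dangling_of e \<noteq> {} \<or> M2 \<inter> dangling_of e \<noteq> {} \<or> M3 \<inter> dangling_of e \<noteq> {})
          \<longrightarrow> card (links_of (cut_edges e) - (M1 \<union> M2 \<union> M3)) \<ge> 3"
  proof (intro allI impI)
    fix M1 M2 M3
    assume h: "pm M1 \<and> pm M2 \<and> pm M3
          \<and> (M1 \<inter> dangling_of e \<noteq> {} \<or> M2 \<inter> dangling_of e \<noteq> {} \<or> M3 \<inter> dangling_of e \<noteq> {})"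
    then obtain N1 N2 N3 where N: "N1 \<in> PS" "N2 \<in> PS" "N3 \<in> PS"
      "M1 = phi e N1" "M2 = phi e N2" "M3 = phi e N3" using char by meson
    then have "e \<in> N1 \<union> N2 \<union> N3" using h dang0 by auto
    moreover have "card (N1 \<union> N2 \<union> N3) \<le> 12" using card_U N by blast
    ultimately show "card (links_of (cut_edges e) - (M1 \<union> M2 \<union> M3)) \<ge> 3"
      using cnt[OF N(1-3)] N(4-6) by simp
  qed
  have E: "\<exists>M1 M2 M3. pm M1 \<and> pm M2 \<and> pm M3
          \<and> (M1 \<inter> dangling_of e \<noteq> {} \<or> M2 \<inter> dangling_of e \<noteq> {} \<or> M3 \<inter> dangling_of e \<noteq> {})
          \<and> card (links_of (cut_edges e) - (M1 \<union> M2 \<union> M3)) = 3"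
  proof -
    obtain N1 N2 N3 where N: "N1 \<in> PS" "N2 \<in> PS" "N3 \<in> PS" "e \<in> N1"
      "card (N1 \<union> N2 \<union> N3) = 12" using exist_c[OF e] by blast
    show ?thesis
      apply (rule exI[of _ "phi e N1"], rule exI[of _ "phi e N2"], rule exI[of _ "phi e N3"])
      using N bk dang0 cnt[OF N(1-3)] by simp
  qed
  show ?thesis using A B C D E by blast
qed

end
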